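(* Let $J$ be a simple current of $\mathcal{A}$, $\psi\in\{0,1\}$, and let $\langle p,q\rangle$, $\langle p',q'\rangle$ be off-diagonal fields of $\mathcal{A}_{\rm perm}$. Then $$N_{(J,\psi)\langle p,q\rangle}^{\phantom{(J,\psi)\langle p,q\rangle}\langle p',q'\rangle}=N_{Jp}^{\ \ p'}N_{Jq}^{\ \ q'}+N_{Jp}^{\ \ q'}N_{Jq}^{\ \ p'}.$$ Consequently, if moreover $J$ has order two ($J\cdot J=0$), then $\langle p,q\rangle$ is a fixed point of $(J,\psi)$ (i.e. $N_{(J,\psi)\langle p,q\rangle}^{\phantom{(J,\psi)\langle p,q\rangle}\langle p,q\rangle}=1$), for either value of $\psi$, if and only if either $Jp=p$ and $Jq=q$, or $Jp=q$.
   Context: Let $\mathcal{A}$ be a unitary rational conformal field theory with finite set of primary fields $I$, identity $0\in I$, central charge $c$, conformal weights $h_i$, and modular matrices $S$ (symmetric, unitary, with $S_{0i}\ge S_{00}>0$) and $T=\mathrm{diag}(e^{2\pi i(h_i-c/24)})$; put $P=T^{1/2}ST^{2}ST^{1/2}$. Fusion coefficients of $\mathcal{A}$ are $N_{ij}^{\ \ k}=\sum_{m\in I}S_{im}S_{jm}\overline{S_{km}}/S_{0m}$ (non-negative integers). A simple current $J$ of $\mathcal{A}$ is a field with $S_{J0}=S_{00}$; for each $i$ there is then a unique field $Ji$ with $N_{Ji}^{\ \ k}=\delta_{k,Ji}$. The $\mathbb{Z}_2$ permutation orbifold $\mathcal{A}_{\rm perm}$ has primaries: diagonal $(i,\psi)$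 ($i\in I$, $\psi\in\{0,1\}$), off-diagonal $\langle i,j\rangle$ (unordered pairs $i\neq j$), twisted $\widehat{(i,\psi)}$; identity $(0,0)$; modular matrix $S^{BHS}$ given by $S^{BHS}_{\langle i,j\rangle\langle p,q\rangle}=S_{ip}S_{jq}+S_{iq}S_{jp}$, $S^{BHS}_{\langle i,j\rangle(p,\psi)}=S_{ip}S_{jp}$, $S^{BHS}_{\langle i,j\rangle\widehat{(p,\psi)}}=0$, $S^{BHS}_{(i,\psi)(j,\chi)}=\tfrac12 S_{ij}^2$, $S^{BHS}_{(i,\psi)\widehat{(p,\chi)}}=\tfrac12 e^{i\pi\psi}S_{ip}$, $S^{BHS}_{\widehat{(p,\psi)}\widehat{(q,\chi)}}=\tfrac12 e^{i\pi(\psi+\chi)}P_{pq}$ (and symmetric). Fusion coefficients of $\mathcal{A}_{\rm perm}$ are defined by the Verlinde formula $N_{AB}^{\ \ C}=\sum_{N}S^{BHS}_{AN}S^{BHS}_{BN}\overline{S^{BHS}_{CN}}/S^{BHS}_{(0,0)N}$, the sum running over all primaries $N$ of $\mathcal{A}_{\rm perm}$. *)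

theory Defs
  imports Complex_Main
begin

text \<open>Data of the RCFT: the index set of primaries is a finite type 'i (a linear
order on it is only used to pick a canonical representative of unordered pairs),
identity z, modular matrix S, conformal weights h, central charge c.\<close>

definition fus :: "('i::finite \<Rightarrow> 'i \<Rightarrow> complex) \<Rightarrow> 'i \<Rightarrow> 'i \<Rightarrow> 'i \<Rightarrow> 'i \<Rightarrow> complex" where
  "fus S z i j k = (\<Sum>m\<in>UNIV. S i m * S j m * cnj (S k m) / S z m)"

definition rcft :: "('i::finite \<Rightarrow> 'i \<Rightarrow> complex) \<Rightarrow> 'i \<Rightarrow> bool" where
  "rcft S z \<longleftrightarrow>
     (\<forall>i j. S i j = S j i) \<and>
     (\<forall>i j. (\<Sum>k\<in>UNIV. S i k * cnj (S j k)) = (if i = j then 1 else 0)) \<and>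
     (\<forall>i. S z i \<in> \<real>) \<and> 0 < Re (S z z) \<and> (\<forall>i. Re (S z z) \<le> Re (S z i)) \<and>
     (\<forall>i j k. fus S z i j k \<in> \<nat>)"

definition thalf :: "('i \<Rightarrow> real) \<Rightarrow> real \<Rightarrow> 'i \<Rightarrow> complex" where
  "thalf h c i = exp (\<i> * complex_of_real (pi * (h i - c / 24)))"

definition Tdiag :: "('i \<Rightarrow> real) \<Rightarrow> real \<Rightarrow> 'i \<Rightarrow> complex" where
  "Tdiag h c i = exp (\<i> * complex_of_real (2 * pi * (h i - c / 24)))"

definition Pmat :: "('i::finite \<Rightarrow> 'i \<Rightarrow> complex) \<Rightarrow> ('i \<Rightarrow> real) \<Rightarrow> real \<Rightarrow> 'i \<Rightarrow> 'i \<Rightarrow> complex" where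
  "Pmat S h c p q = thalf h c p * (\<Sum>k\<in>UNIV. S p k * (Tdiag h c k)^2 * S k q) * thalf h c q"

definition simple_current :: "('i \<Rightarrow> 'i \<Rightarrow> complex) \<Rightarrow> 'i \<Rightarrow> 'i \<Rightarrow> bool" where
  "simple_current S z J \<longleftrightarrow> S J z = S z z"

definition sc_act :: "('i::finite \<Rightarrow> 'i \<Rightarrow> complex) \<Rightarrow> 'i \<Rightarrow> 'i \<Rightarrow> 'i \<Rightarrow> 'i" where
  "sc_act S z J i = (THE k. \<forall>l. fus S z J i l = (if l = k then 1 else 0))"

text \<open>Primaries of the Z2 permutation orbifold; the bool encodes psi (False = 0, True = 1).
Off i j represents the unordered pair <i,j>; the canonical representative has i < j.\<close>
datatype 'i pfield = Diag 'i bool | Off 'i 'i | Tw 'i bool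

definition off :: "'i::linorder \<Rightarrow> 'i \<Rightarrow> 'i pfield" where
  "off p q = Off (min p q) (max p q)"

definition prims :: "('i::linorder) pfield set" where
  "prims = range (\<lambda>(i, b). Diag i b) \<union> {Off i j | i j. i < j} \<union> range (\<lambda>(p, b). Tw p b)"

definition sgnb :: "bool \<Rightarrow> complex" where
  "sgnb b = (if b then -1 else 1)"   (* e^{i pi psi} *)

fun SB :: "('i \<Rightarrow> 'i \<Rightarrow> complex) \<Rightarrow> ('i \<Rightarrow> 'i \<Rightarrow> complex) \<Rightarrow> 'i pfield \<Rightarrow> 'i pfield \<Rightarrow> complex" where
  "SB S P (Off i j) (Off p q) = S i p * S j q + S i q * S j p"
| "SB S P (Off i j) (Diag p \<psi>) = S i p * S j p"
| "SB S P (Diag p \<psi>) (Off i j) = S i p * S j p"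
| "SB S P (Off i j) (Tw p \<psi>) = 0"
| "SB S P (Tw p \<psi>) (Off i j) = 0"
| "SB S P (Diag i \<psi>) (Diag j \<chi>) = (1/2) * (S i j)^2"
| "SB S P (Diag i \<psi>) (Tw p \<chi>) = (1/2) * sgnb \<psi> * S i p"
| "SB S P (Tw p \<chi>) (Diag i \<psi>) = (1/2) * sgnb \<psi> * S i p"
| "SB S P (Tw p \<psi>) (Tw q \<chi>) = (1/2) * sgnb \<psi> * sgnb \<chi> * P p q"

definition fus_perm :: "('i::{finite,linorder} \<Rightarrow> 'i \<Rightarrow> complex) \<Rightarrow> 'i \<Rightarrow> ('i \<Rightarrow> real) \<Rightarrow> real
    \<Rightarrow> 'i pfield \<Rightarrow> 'i pfield \<Rightarrow> 'i pfield \<Rightarrow> complex" where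
  "fus_perm S z h c A B C =
     (\<Sum>X\<in>prims. SB S (Pmat S h c) A X * SB S (Pmat S h c) B X * cnj (SB S (Pmat S h c) C X)
                 / SB S (Pmat S h c) (Diag z False) X)"

end

theory Submission
  imports Defs
begin


lemma rc_sym: "rcft S z \<Longrightarrow> S i j = S j i" unfolding rcft_def by blast
lemma rc_unit: "rcft S z \<Longrightarrow> (\<Sum>k\<in>UNIV. S i k * cnj (S j k)) = (if i = j then 1 else 0)"
  unfolding rcft_def by blast
lemma rc_col: "rcft S z \<Longrightarrow> (\<Sum>k\<in>UNIV. S k i * cnj (S k j)) = (if i = j then 1 else 0)"
  using rc_unit[of S z i j] rc_sym[of S z] by simp
lemma rc_nat: "rcft S z \<Longrightarrow> fus S z i j k \<in> \<nat>" unfolding rcft_def by blast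
lemma rc_zreal: "rcft S z \<Longrightarrow> S z i = of_real (Re (S z i))"
  unfolding rcft_def by (metis Reals_cases Re_complex_of_real)
lemma rc_zpos: "rcft S z \<Longrightarrow> 0 < Re (S z i)"
  unfolding rcft_def by (meson less_le_trans)
lemma rc_znz: "rcft S z \<Longrightarrow> S z i \<noteq> 0"
  using rc_zpos[of S z i] by auto

lemma eig:
  assumes "rcft S z"
  shows "(\<Sum>k\<in>UNIV. fus S z j i k * S k m) = S j m * S i m / S z m"
proof -
  have "(\<Sum>k\<in>UNIV. fus S z j i k * S k m)
      = (\<Sum>k\<in>UNIV. \<Sum>m'\<in>UNIV. S j m' * S i m' / S z m' * (S k m * cnj (S k m')))"
    unfolding fus_def by (simp add: sum_distrib_left mult_ac)
  also have "\<dots> = (\<Sum>m'\<in>UNIV. S j m' * S i m' / S z m' * (\<Sum>k\<in>UNIV. S k m * cnj (S k m')))"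
    by (subst sum.swap) (simp add: sum_distrib_left)
  also have "\<dots> = (\<Sum>m'\<in>UNIV. S j m' * S i m' / S z m' * (if m = m' then 1 else 0))"
    by (simp add: rc_col[OF assms])
  also have "\<dots> = S j m * S i m / S z m" by (simp add: if_distrib cong: if_cong)
  finally show ?thesis .
qed

lemma normsq: "(x::complex) * cnj x = of_real ((cmod x)^2)"
  by (rule complex_norm_square[symmetric])

lemma rownorm: assumes "rcft S z" shows "(\<Sum>k\<in>UNIV. (cmod (S i k))^2) = 1"
proof -
  have "of_real (\<Sum>k\<in>UNIV. (cmod (S i k))^2) = (1::complex)"
    using rc_unit[OF assms, of i i] by (simp add: normsq)
  then show ?thesis by (metis of_real_1 of_real_eq_iff)
qed

lemma nat_cmod: "(x::complex) \<in> \<nat> \<Longrightarrow> x = of_real (cmod x)"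
  by (metis Nats_cases norm_of_nat of_real_of_nat_eq)

lemma SJ_le:
  assumes r: "rcft S z" and sc: "simple_current S z J"
  shows "cmod (S J m) \<le> cmod (S z m)"
proof -
  let ?r = "\<lambda>k. cmod (S k m) / cmod (S z k)"
  define t where "t = Max (range ?r)"
  obtain i where ti: "?r i = t" unfolding t_def
    by (metis (mono_tags, lifting) Max_in finite_UNIV finite_imageI imageE image_is_empty UNIV_not_empty)
  have tk: "?r k \<le> t" for k unfolding t_def by simp
  have znz: "\<And>k. cmod (S z k) > 0" using rc_znz[OF r] by simp
  have bound: "cmod (S k m) \<le> t * cmod (S z k)" for k
    using tk[of k] znz[of k] by (simp add: divide_le_eq)
  have "\<exists>k. S k m \<noteq> 0"
  proof (rule ccontr)
    assume "\<not> ?thesis"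
    then have "(\<Sum>k\<in>UNIV. S k m * cnj (S k m)) = 0" by simp
    with rc_col[OF r, of m m] show False by simp
  qed
  then obtain k0 where "S k0 m \<noteq> 0" by blast
  then have tpos: "t > 0" using bound[of k0] znz[of k0]
    by (smt (verit, best) mult_nonpos_nonneg norm_ge_zero zero_less_norm_iff)
  let ?N = "\<lambda>k. fus S z J i k"
  have Nk: "?N k = of_real (cmod (?N k))" for k by (rule nat_cmod[OF rc_nat[OF r]])
  have e1: "(\<Sum>k\<in>UNIV. ?N k * S k m) = S J m * S i m / S z m" by (rule eig[OF r])
  have e2: "(\<Sum>k\<in>UNIV. ?N k * S z k) = S z i"
  proof -
    have "(\<Sum>k\<in>UNIV. ?N k * S z k) = (\<Sum>k\<in>UNIV. ?N k * S k z)" using rc_sym[OF r] by metis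
    also have "\<dots> = S z i"
      using eig[OF r, of J i z] sc rc_sym[OF r, of i z] rc_znz[OF r, of z]
      by (simp add: simple_current_def)
    finally show ?thesis .
  qed
  have e3: "of_real (\<Sum>k\<in>UNIV. cmod (?N k) * cmod (S z k)) = (\<Sum>k\<in>UNIV. ?N k * S z k)"
  proof -
    have "cmod (S z k) = Re (S z k)" for k using rc_zpos[OF r, of k] rc_zreal[OF r, of k]
      by (metis abs_of_pos norm_of_real)
    then have "of_real (cmod (?N k) * cmod (S z k)) = ?N k * S z k" for k
      using Nk[of k] rc_zreal[OF r, of k] by (metis of_real_mult)
    then show ?thesis by (simp add: of_real_sum)
  qed
  have "cmod (S J m * S i m / S z m) \<le> (\<Sum>k\<in>UNIV. cmod (?N k) * cmod (S k m))"
    unfolding e1[symmetric] by (rule order_trans[OF norm_sum]) (simp add: norm_mult)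
  also have "\<dots> \<le> (\<Sum>k\<in>UNIV. cmod (?N k) * (t * cmod (S z k)))"
    by (rule sum_mono, rule mult_left_mono[OF bound]) simp
  also have "\<dots> = t * (\<Sum>k\<in>UNIV. cmod (?N k) * cmod (S z k))"
    by (simp add: sum_distrib_left mult_ac)
  also have "(\<Sum>k\<in>UNIV. cmod (?N k) * cmod (S z k)) = cmod (S z i)"
  proof -
    have nn: "0 \<le> (\<Sum>k\<in>UNIV. cmod (?N k) * cmod (S z k))" by (simp add: sum_nonneg)
    have "cmod (S z i) = cmod (of_real (\<Sum>k\<in>UNIV. cmod (?N k) * cmod (S z k)) :: complex)"
      using e3 e2 by simp
    also have "\<dots> = (\<Sum>k\<in>UNIV. cmod (?N k) * cmod (S z k))" using nn by (simp only: norm_of_real)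
    finally show ?thesis by simp
  qed
  finally have A: "cmod (S J m) * cmod (S i m) / cmod (S z m) \<le> t * cmod (S z i)"
    by (simp add: norm_mult norm_divide)
  have Si: "cmod (S i m) = t * cmod (S z i)" using ti znz[of i] by (simp add: field_simps)
  have "cmod (S i m) > 0" using Si tpos znz[of i] by simp
  moreover have "cmod (S J m) / cmod (S z m) * cmod (S i m) \<le> 1 * cmod (S i m)"
    using A Si by simp
  ultimately have "cmod (S J m) / cmod (S z m) \<le> 1"
    using mult_le_cancel_right_pos by blast
  then show ?thesis using znz[of m] by (simp add: divide_le_eq)
qed


lemma SJ_eq:
  assumes r: "rcft S z" and sc: "simple_current S z J"
  shows "cmod (S J m) = cmod (S z m)"
proof -
  have "(\<Sum>k\<in>UNIV. (cmod (S z k))^2 - (cmod (S J k))^2) = 0"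
    using rownorm[OF r, of z] rownorm[OF r, of J] by (simp add: sum_subtractf)
  moreover have "\<forall>k\<in>UNIV. 0 \<le> (cmod (S z k))^2 - (cmod (S J k))^2"
    using SJ_le[OF r sc] by (simp add: power_mono)
  ultimately have "\<forall>k\<in>UNIV. (cmod (S z k))^2 - (cmod (S J k))^2 = 0"
    using sum_nonneg_eq_0_iff[OF finite_UNIV, of "\<lambda>k. (cmod (S z k))^2 - (cmod (S J k))^2"] by blast
  then have "(cmod (S z m))^2 - (cmod (S J m))^2 = 0" by blast
  then show ?thesis by (simp add: power2_eq_iff_nonneg)
qed

lemma parseval:
  assumes r: "rcft S z"
  shows "(\<Sum>k\<in>UNIV. (cmod (\<Sum>m\<in>UNIV. w m * cnj (S k m)))^2) = (\<Sum>m\<in>UNIV. (cmod (w m))^2)"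
proof -
  have "(of_real (\<Sum>k\<in>UNIV. (cmod (\<Sum>m\<in>UNIV. w m * cnj (S k m)))^2) :: complex)
     = (\<Sum>k\<in>UNIV. (\<Sum>m\<in>UNIV. w m * cnj (S k m)) * cnj (\<Sum>m'\<in>UNIV. w m' * cnj (S k m')))"
    by (simp only: of_real_sum complex_norm_square)
  also have "\<dots> = (\<Sum>k\<in>UNIV. \<Sum>m'\<in>UNIV. \<Sum>m\<in>UNIV. w m * cnj (w m') * (S k m' * cnj (S k m)))"
    by (simp add: sum_distrib_left sum_distrib_right mult_ac)
  also have "\<dots> = (\<Sum>m'\<in>UNIV. \<Sum>m\<in>UNIV. w m * cnj (w m') * (\<Sum>k\<in>UNIV. S k m' * cnj (S k m)))"
  proof -
    have "(\<Sum>k\<in>UNIV. \<Sum>m'\<in>UNIV. \<Sum>m\<in>UNIV. w m * cnj (w m') * (S k m' * cnj (S k m)))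
      = (\<Sum>m'\<in>UNIV. \<Sum>k\<in>UNIV. \<Sum>m\<in>UNIV. w m * cnj (w m') * (S k m' * cnj (S k m)))"
      by (rule sum.swap[of "\<lambda>k m'. \<Sum>m\<in>UNIV. w m * cnj (w m') * (S k m' * cnj (S k m))"])
    also have "\<dots> = (\<Sum>m'\<in>UNIV. \<Sum>m\<in>UNIV. \<Sum>k\<in>UNIV. w m * cnj (w m') * (S k m' * cnj (S k m)))"
      by (rule sum.cong[OF refl], rule sum.swap[of "\<lambda>k m. w m * cnj (w _) * (S k _ * cnj (S k m))"])
    finally show ?thesis by (simp only: sum_distrib_left)
  qed
  also have "\<dots> = (\<Sum>m'\<in>UNIV. w m' * cnj (w m'))"
    by (simp add: rc_col[OF r] if_distrib[of "\<lambda>x. _ * x"] cong: if_cong)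
  also have "\<dots> = of_real (\<Sum>m\<in>UNIV. (cmod (w m))^2)"
    by (simp only: of_real_sum complex_norm_square)
  finally show ?thesis by (simp only: of_real_eq_iff)
qed

lemma fus_sq:
  assumes r: "rcft S z" and sc: "simple_current S z J"
  shows "(\<Sum>k\<in>UNIV. (cmod (fus S z J i k))^2) = 1"
proof -
  let ?w = "\<lambda>m. S J m * S i m / S z m"
  have "fus S z J i k = (\<Sum>m\<in>UNIV. ?w m * cnj (S k m))" for k
    unfolding fus_def by (simp add: field_simps)
  then have "(\<Sum>k\<in>UNIV. (cmod (fus S z J i k))^2) = (\<Sum>m\<in>UNIV. (cmod (?w m))^2)"
    using parseval[OF r, of ?w] by simp
  also have "\<dots> = (\<Sum>m\<in>UNIV. (cmod (S i m))^2)"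
    using SJ_eq[OF r sc] rc_znz[OF r] by (simp add: norm_mult norm_divide)
  finally show ?thesis using rownorm[OF r] by simp
qed

lemma nat_sq1:
  fixes f :: "'a::finite \<Rightarrow> nat"
  assumes "(\<Sum>k\<in>UNIV. (f k)^2) = 1"
  shows "\<exists>k. f k = 1 \<and> (\<forall>l. l \<noteq> k \<longrightarrow> f l = 0)"
proof -
  have "\<exists>k. f k \<noteq> 0"
  proof (rule ccontr)
    assume "\<not> ?thesis"
    then have "\<forall>k. f k = 0" by blast
    then have "(\<Sum>k\<in>UNIV. (f k)^2) = 0" by simp
    with assms show False by simp
  qed
  then obtain k where k: "f k \<noteq> 0" by blast
  have le: "(\<Sum>k\<in>A. (f k)^2) \<le> 1" for A
    using sum_mono2[of UNIV A "\<lambda>k. (f k)^2"] assms by simp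
  have "(f k)^2 \<le> 1" using le[of "{k}"] by simp
  then have fk: "f k = 1" using k by (cases "f k") (auto simp: power2_eq_square)
  have "f l = 0" if "l \<noteq> k" for l
    using le[of "{k,l}"] that fk by simp
  then show ?thesis using fk by blast
qed

lemma delta_ex:
  assumes r: "rcft S z" and sc: "simple_current S z J"
  shows "\<exists>k. \<forall>l. fus S z J i l = (if l = k then 1 else 0)"
proof -
  define f where "f l = (SOME n::nat. fus S z J i l = of_nat n)" for l
  have ff: "fus S z J i l = of_nat (f l)" for l
    unfolding f_def by (rule someI_ex) (metis Nats_cases rc_nat[OF r])
  have "(\<Sum>k\<in>UNIV. (f k)^2) = 1"
  proof -
    have "real (\<Sum>k\<in>UNIV. (f k)^2) = (\<Sum>k\<in>UNIV. (cmod (fus S z J i k))^2)"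
      by (simp add: ff)
    then show ?thesis using fus_sq[OF r sc, of i] by linarith
  qed
  from nat_sq1[OF this] obtain k where "f k = 1" "\<forall>l. l \<noteq> k \<longrightarrow> f l = 0" by blast
  then show ?thesis by (intro exI[of _ k] allI) (auto simp: ff)
qed

lemma delta:
  assumes r: "rcft S z" and sc: "simple_current S z J"
  shows "fus S z J i l = (if l = sc_act S z J i then 1 else 0)"
proof -
  obtain k where k: "\<forall>l. fus S z J i l = (if l = k then 1 else 0)" using delta_ex[OF r sc] by blast
  have "sc_act S z J i = k" unfolding sc_act_def
  proof (rule the_equality)
    show "\<forall>l. fus S z J i l = (if l = k then 1 else 0)" by (rule k)
    fix k' assume "\<forall>l. fus S z J i l = (if l = k' then 1 else 0)"
    with k show "k' = k" by (metis zero_neq_one)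
  qed
  then show ?thesis using k by simp
qed

lemma S_act:
  assumes r: "rcft S z" and sc: "simple_current S z J"
  shows "S (sc_act S z J i) m = S J m * S i m / S z m"
  using eig[OF r, of J i m] by (simp add: delta[OF r sc] if_distrib[of "\<lambda>x. x * _"] cong: if_cong)



lemma sum_prims:
  fixes \<phi> :: "('i::{finite,linorder}) pfield \<Rightarrow> complex"
  shows "(\<Sum>X\<in>prims. \<phi> X) = (\<Sum>ib\<in>UNIV. \<phi> (Diag (fst ib) (snd ib)))
     + (\<Sum>ij\<in>{ij. fst ij < snd ij}. \<phi> (Off (fst ij) (snd ij)))
     + (\<Sum>pb\<in>UNIV. \<phi> (Tw (fst pb) (snd pb)))"
proof -
  let ?D = "range (\<lambda>(i::'i, b). Diag i b)"
  let ?O = "(\<lambda>ij. Off (fst ij) (snd ij)) ` {ij::'i\<times>'i. fst ij < snd ij}"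
  let ?T = "range (\<lambda>(p::'i, b). Tw p b)"
  have P: "prims = ?D \<union> ?O \<union> ?T" unfolding prims_def by (auto simp: image_iff)
  have fD: "finite ?D" and fO: "finite ?O" and fT: "finite ?T" by auto
  have "(\<Sum>X\<in>prims. \<phi> X) = sum \<phi> ?D + sum \<phi> ?O + sum \<phi> ?T"
  proof -
    have d1: "?D \<inter> ?O = {}" and d2: "(?D \<union> ?O) \<inter> ?T = {}" by auto
    have fDO: "finite (?D \<union> ?O)" using fD fO by simp
    show ?thesis unfolding P
      by (simp only: sum.union_disjoint[OF fDO fT d2] sum.union_disjoint[OF fD fO d1])
  qed
  also have "sum \<phi> ?D = (\<Sum>ib\<in>UNIV. \<phi> (Diag (fst ib) (snd ib)))"
    by (subst sum.reindex) (auto simp: inj_on_def case_prod_beta)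
  also have "sum \<phi> ?O = (\<Sum>ij\<in>{ij. fst ij < snd ij}. \<phi> (Off (fst ij) (snd ij)))"
    by (subst sum.reindex) (auto simp: inj_on_def prod_eq_iff)
  also have "sum \<phi> ?T = (\<Sum>pb\<in>UNIV. \<phi> (Tw (fst pb) (snd pb)))"
    by (subst sum.reindex) (auto simp: inj_on_def case_prod_beta)
  finally show ?thesis .
qed


lemma sym_split:
  fixes F :: "'i::{finite,linorder} \<Rightarrow> 'i \<Rightarrow> complex"
  assumes sym: "\<And>x y. F x y = F y x"
  shows "(\<Sum>x\<in>UNIV. \<Sum>y\<in>UNIV. F x y) = 2 * (\<Sum>p\<in>{p. fst p < snd p}. F (fst p) (snd p)) + (\<Sum>x\<in>UNIV. F x x)"
proof -
  let ?U = "{p::'i\<times>'i. fst p < snd p}" and ?L = "{p::'i\<times>'i. snd p < fst p}" and ?D = "{p::'i\<times>'i. fst p = snd p}"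
  have "(\<Sum>x\<in>UNIV. \<Sum>y\<in>UNIV. F x y) = (\<Sum>p\<in>UNIV. F (fst p) (snd p))"
    by (simp add: sum.cartesian_product case_prod_beta)
  also have "UNIV = ?U \<union> ?L \<union> ?D" by auto
  also have "(\<Sum>p\<in>?U \<union> ?L \<union> ?D. F (fst p) (snd p)) = (\<Sum>p\<in>?U. F (fst p) (snd p)) + (\<Sum>p\<in>?L. F (fst p) (snd p)) + (\<Sum>p\<in>?D. F (fst p) (snd p))"
    by (subst sum.union_disjoint, simp, simp, force, subst sum.union_disjoint) auto
  also have "(\<Sum>p\<in>?L. F (fst p) (snd p)) = (\<Sum>p\<in>?U. F (fst p) (snd p))"
  proof -
    have "?L = (\<lambda>p. (snd p, fst p)) ` ?U" by (auto simp: image_iff)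
    moreover have "inj_on (\<lambda>p::'i\<times>'i. (snd p, fst p)) ?U" by (auto simp: inj_on_def prod_eq_iff)
    ultimately show ?thesis by (simp add: sum.reindex sym)
  qed
  also have "(\<Sum>p\<in>?D. F (fst p) (snd p)) = (\<Sum>x\<in>UNIV. F x x)"
  proof -
    have "?D = (\<lambda>x. (x, x)) ` UNIV" by (auto simp: image_iff prod_eq_iff)
    moreover have "inj (\<lambda>x::'i. (x, x))" by (auto simp: inj_on_def)
    ultimately show ?thesis by (simp add: sum.reindex)
  qed
  finally show ?thesis by simp
qed

lemma phiD_gen:
  fixes J1 a1 b1 c1 d1 z1 :: complex
  shows "1/2 * J1^2 * (a1 * b1) * cnj (c1 * d1) / (1/2 * z1^2) = J1 ^ 2 * a1 * b1 * cnj c1 * cnj d1 / z1 ^ 2"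
  by (simp add: complex_cnj_mult)
lemma Fexp_gen:
  fixes J1 J2 a1 a2 b1 b2 c1 c2 d1 d2 z1 z2 :: complex
  shows "J1 * J2 * (a1 * b2 + a2 * b1) * cnj (c1 * d2 + c2 * d1) / (z1 * z2)
   = (J1 * a1 * cnj c1 / z1) * (J2 * b2 * cnj d2 / z2) + (J1 * a1 * cnj d1 / z1) * (J2 * b2 * cnj c2 / z2)
   + (J1 * b1 * cnj c1 / z1) * (J2 * a2 * cnj d2 / z2) + (J1 * b1 * cnj d1 / z1) * (J2 * a2 * cnj c2 / z2)"
  unfolding divide_inverse complex_cnj_add complex_cnj_mult inverse_mult_distrib by algebra
lemma Fdiag_gen:
  fixes J1 a1 b1 c1 d1 z1 :: complex
  shows "J1 * J1 * (a1 * b1 + a1 * b1) * cnj (c1 * d1 + c1 * d1) / (z1 * z1)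
   = 4 * (J1 ^ 2 * a1 * b1 * cnj c1 * cnj d1 / z1 ^ 2)"
  unfolding divide_inverse complex_cnj_add complex_cnj_mult inverse_mult_distrib power2_eq_square by algebra
lemma Fsym_gen:
  fixes J1 J2 a1 a2 b1 b2 c1 c2 d1 d2 z1 z2 :: complex
  shows "J1 * J2 * (a1 * b2 + a2 * b1) * cnj (c1 * d2 + c2 * d1) / (z1 * z2) =
         J2 * J1 * (a2 * b1 + a1 * b2) * cnj (c2 * d1 + c1 * d2) / (z2 * z1)"
  by (simp only: mult.commute add.commute)

lemma part1:
  fixes S :: "'i::{finite,linorder} \<Rightarrow> 'i \<Rightarrow> complex"
  assumes r: "rcft S z"
  shows "fus_perm S z h c (Diag J \<psi>) (Off a b) (Off c' d) =
     fus S z J a c' * fus S z J b d + fus S z J a d * fus S z J b c'"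
proof -
  let ?Q = "Pmat S h c"
  define \<phi> where "\<phi> X = SB S ?Q (Diag J \<psi>) X * SB S ?Q (Off a b) X * cnj (SB S ?Q (Off c' d) X) / SB S ?Q (Diag z False) X" for X
  define F where "F x y = S J x * S J y * (S a x * S b y + S a y * S b x) * cnj (S c' x * S d y + S c' y * S d x) / (S z x * S z y)" for x y
  define g where "g m = S J m ^ 2 * S a m * S b m * cnj (S c' m) * cnj (S d m) / S z m ^ 2" for m
  define N where "N x y = fus S z J x y" for x y
  have sy: "\<And>i j. S i j = S j i" using rc_sym[OF r] by blast
  have nz: "\<And>m. S z m \<noteq> 0" using rc_znz[OF r] by blast
  have phiO: "\<phi> (Off x y) = F x y" for x y
    unfolding \<phi>_def F_def by (simp only: SB.simps sy[of x J] sy[of y J] sy[of x z] sy[of y z])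
  have phiD: "\<phi> (Diag m \<chi>) = g m" for m \<chi>
    unfolding \<phi>_def g_def SB.simps by (rule phiD_gen)
  have phiT: "\<phi> (Tw p \<chi>) = 0" for p \<chi> unfolding \<phi>_def by simp
  have Fsym: "F x y = F y x" for x y unfolding F_def by (rule Fsym_gen)
  have Fdiag: "F x x = 4 * g x" for x
    unfolding F_def g_def by (rule Fdiag_gen)
  have Fexp: "F x y = (S J x * S a x * cnj (S c' x) / S z x) * (S J y * S b y * cnj (S d y) / S z y)
     + (S J x * S a x * cnj (S d x) / S z x) * (S J y * S b y * cnj (S c' y) / S z y)
     + (S J x * S b x * cnj (S c' x) / S z x) * (S J y * S a y * cnj (S d y) / S z y)
     + (S J x * S b x * cnj (S d x) / S z x) * (S J y * S a y * cnj (S c' y) / S z y)" for x y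
    unfolding F_def by (rule Fexp_gen)
  have all: "(\<Sum>x\<in>UNIV. \<Sum>y\<in>UNIV. F x y) = 2 * (N a c' * N b d + N a d * N b c')"
  proof -
    have sp: "\<And>u v. (\<Sum>x\<in>UNIV. \<Sum>y\<in>UNIV. (u x::complex) * v y) = sum u UNIV * sum v UNIV"
      by (simp add: sum_product)
    show ?thesis
      unfolding Fexp by (simp only: sum.distrib sp fus_def[symmetric] N_def) (simp add: algebra_simps)
  qed
  have "fus_perm S z h c (Diag J \<psi>) (Off a b) (Off c' d) = sum \<phi> prims"
    unfolding fus_perm_def \<phi>_def ..
  also have "\<dots> = (\<Sum>ib\<in>(UNIV::('i\<times>bool) set). g (fst ib)) + (\<Sum>ij\<in>{ij. fst ij < snd ij}. F (fst ij) (snd ij))"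
    unfolding sum_prims by (simp add: phiO phiD phiT)
  also have "(\<Sum>ib\<in>(UNIV::('i\<times>bool) set). g (fst ib)) = 2 * (\<Sum>m\<in>UNIV. g m)"
  proof -
    have "(\<Sum>x\<in>UNIV. \<Sum>y\<in>(UNIV::bool set). g x) = (\<Sum>p\<in>(UNIV::('i\<times>bool) set). g (fst p))"
      by (simp only: sum.cartesian_product) (simp add: case_prod_beta)
    moreover have "(\<Sum>x\<in>UNIV. \<Sum>y\<in>(UNIV::bool set). g x) = 2 * (\<Sum>m\<in>UNIV. g m)"
      by (simp add: sum_distrib_left)
    ultimately show ?thesis by simp
  qed
  finally have fin: "fus_perm S z h c (Diag J \<psi>) (Off a b) (Off c' d) = 2 * sum g UNIV + (\<Sum>ij\<in>{ij. fst ij < snd ij}. F (fst ij) (snd ij))" .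
  have "(\<Sum>x\<in>UNIV. F x x) = 4 * sum g UNIV" by (simp add: Fdiag sum_distrib_left)
  then have "2 * (N a c' * N b d + N a d * N b c') = 2 * (\<Sum>ij\<in>{ij. fst ij < snd ij}. F (fst ij) (snd ij)) + 4 * sum g UNIV"
    using sym_split[of F, OF Fsym] all by simp
  then have "2 * (N a c' * N b d + N a d * N b c') = 2 * ((\<Sum>ij\<in>{ij. fst ij < snd ij}. F (fst ij) (snd ij)) + 2 * sum g UNIV)"
    by (simp add: algebra_simps)
  then have "N a c' * N b d + N a d * N b c' = (\<Sum>ij\<in>{ij. fst ij < snd ij}. F (fst ij) (snd ij)) + 2 * sum g UNIV"
    using mult_left_cancel[of "2::complex"] by (metis zero_neq_numeral)
  then show ?thesis using fin unfolding N_def by simp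
qed



lemma rows_eq:
  assumes r: "rcft S z" and eq: "\<And>k. S a k = S b k"
  shows "a = b"
proof -
  have "(\<Sum>k\<in>UNIV. S a k * cnj (S b k)) = 1" using rc_unit[OF r, of b b] by (simp add: eq)
  then show ?thesis using rc_unit[OF r, of a b] by (auto split: if_splits)
qed

lemma invol:
  assumes r: "rcft S z" and sc: "simple_current S z J" and JJ: "sc_act S z J J = z"
  shows "sc_act S z J (sc_act S z J i) = i"
proof (rule rows_eq[OF r])
  fix m
  have nz: "S z m \<noteq> 0" by (rule rc_znz[OF r])
  have zz: "S z m = S J m * S J m / S z m" using S_act[OF r sc, of J m] JJ by simp
  have "S (sc_act S z J (sc_act S z J i)) m = S J m * (S J m * S i m / S z m) / S z m"
    by (simp add: S_act[OF r sc])
  also have "\<dots> = (S J m * S J m / S z m) * S i m / S z m" by simp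
  also have "\<dots> = S i m" using nz by (simp flip: zz)
  finally show "S (sc_act S z J (sc_act S z J i)) m = S i m" .
qed

theorem mainTheorem3:
  fixes S :: "'i::{finite,linorder} \<Rightarrow> 'i \<Rightarrow> complex"
    and z J :: 'i and h :: "'i \<Rightarrow> real" and c :: real
  assumes "rcft S z" and "simple_current S z J"
  shows "(\<forall>\<psi> p q p' q'. p \<noteq> q \<longrightarrow> p' \<noteq> q' \<longrightarrow>
            fus_perm S z h c (Diag J \<psi>) (off p q) (off p' q')
              = fus S z J p p' * fus S z J q q' + fus S z J p q' * fus S z J q p')
       \<and> (sc_act S z J J = z \<longrightarrow>
            (\<forall>\<psi> p q. p \<noteq> q \<longrightarrow>
              (fus_perm S z h c (Diag J \<psi>) (off p q) (off p q) = 1 \<longleftrightarrow>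
                 (sc_act S z J p = p \<and> sc_act S z J q = q) \<or> sc_act S z J p = q)))"
proof -
  note r = assms(1) and sc = assms(2)
  have P1: "fus_perm S z h c (Diag J \<psi>) (off p q) (off p' q')
              = fus S z J p p' * fus S z J q q' + fus S z J p q' * fus S z J q p'" for \<psi> p q p' q'
    unfolding off_def part1[OF r]
    by (cases "p \<le> q"; cases "p' \<le> q'") (simp_all add: min_def max_def add.commute mult.commute)
  show ?thesis
  proof (intro conjI allI impI)
    fix \<psi> p q p' q' show "fus_perm S z h c (Diag J \<psi>) (off p q) (off p' q')
              = fus S z J p p' * fus S z J q q' + fus S z J p q' * fus S z J q p'" by (rule P1)
  next
    fix \<psi> :: bool and p q :: 'i
    assume JJ: "sc_act S z J J = z" and pq: "p \<noteq> q"
    let ?s = "sc_act S z J"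
    have i1: "?s p = q \<Longrightarrow> ?s q = p" using invol[OF r sc JJ, of p] by simp
    have i2: "?s q = p \<Longrightarrow> ?s p = q" using invol[OF r sc JJ, of q] by simp
    show "fus_perm S z h c (Diag J \<psi>) (off p q) (off p q) = 1 \<longleftrightarrow>
                 (?s p = p \<and> ?s q = q) \<or> ?s p = q"
      unfolding P1 delta[OF r sc]
      using pq i1 i2 by (cases "?s p = p"; cases "?s q = q"; cases "?s p = q") auto
  qed
qed


end
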